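(* Let $(S,\mathcal{S})$ be a measurable space with $\Delta\in\mathcal{S}\otimes\mathcal{S}$ and let $\pi$ be a constructive cr-set with independent increments. If $P(\pi\cap \{x\}\neq \emptyset)=0$ for all $x\in S$, then $\pi$ is a Poisson process.
   Context: $\Delta=\{(x,x)\mid x\in S\}$. $(\Omega,\mathcal{F},P)$ is a probability space; $C(S)$ is the set of countable subsets of $S$; $N_A(M)=|A\cap M|$; $\mathcal{C}(\mathcal{S})=\sigma(N_A\mid A\in\mathcal{S})$; a cr-set is an $\mathcal{F}$-$\mathcal{C}(\mathcal{S})$ measurable map $\Omega\to C(S)$, finite if its values are finite sets. A map $\tau:\Omega\to C(S)$ is constructive if $\tau(\omega)=\bigcup_k\pi_k(\omega)$ for all $\omega$ for some finite cr-sets $\pi_k$, $k\in\mathbb{N}$. A cr-set $\pi$ has independent increments if $N_{A_1}(\pi),\dots,N_{A_n}(\pi)$ are independent for all pairwise disjoint $A_1,\dots,A_n\in\mathcal{S}$. It is a Poisson process if moreover $N_A(\pi)$ has a Poisson distribution for every $A\in\mathcal{S}$, where $\delta_0$ and $\delta_\infty$ count as Poisson distributions. *)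

theory Defs
  imports "HOL-Probability.Probability"
begin

definition Ncount :: "'a set \<Rightarrow> 'a set \<Rightarrow> enat" where
  "Ncount A X = (if finite (A \<inter> X) then enat (card (A \<inter> X)) else \<infinity>)"

definition countable_subsets :: "'a measure \<Rightarrow> 'a set set" where
  "countable_subsets M = {X. X \<subseteq> space M \<and> countable X}"

definition CS :: "'a measure \<Rightarrow> 'a set measure" where
  "CS M = sigma (countable_subsets M)
     {{X \<in> countable_subsets M. Ncount A X \<in> B} | A B. A \<in> sets M}"

definition cr_set :: "'b measure \<Rightarrow> 'a measure \<Rightarrow> ('b \<Rightarrow> 'a set) \<Rightarrow> bool" where
  "cr_set P M \<pi> \<longleftrightarrow> \<pi> \<in> measurable P (CS M)"

definition finite_cr_set :: "'b measure \<Rightarrow> 'a measure \<Rightarrow> ('b \<Rightarrow> 'a set) \<Rightarrow> bool" where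
  "finite_cr_set P M \<pi> \<longleftrightarrow> cr_set P M \<pi> \<and> (\<forall>\<omega>\<in>space P. finite (\<pi> \<omega>))"

definition constructive :: "'b measure \<Rightarrow> 'a measure \<Rightarrow> ('b \<Rightarrow> 'a set) \<Rightarrow> bool" where
  "constructive P M \<tau> \<longleftrightarrow>
     (\<exists>\<pi>s :: nat \<Rightarrow> 'b \<Rightarrow> 'a set. (\<forall>k. finite_cr_set P M (\<pi>s k)) \<and>
        (\<forall>\<omega>\<in>space P. \<tau> \<omega> = (\<Union>k. \<pi>s k \<omega>)))"

definition independent_increments :: "'b measure \<Rightarrow> 'a measure \<Rightarrow> ('b \<Rightarrow> 'a set) \<Rightarrow> bool" where
  "independent_increments P M \<pi> \<longleftrightarrow>
     (\<forall>(n::nat) (A :: nat \<Rightarrow> 'a set). (\<forall>i<n. A i \<in> sets M) \<and> disjoint_family_on A {..<n} \<longrightarrow>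
        prob_space.indep_vars P (\<lambda>_. count_space UNIV) (\<lambda>i \<omega>. Ncount (A i) (\<pi> \<omega>)) {..<n})"

text \<open>Poisson distribution on \<nat> \<union> {\<infinity>}, including \<delta>_0 (parameter 0) and \<delta>_\<infinity>.\<close>
definition poisson_distribution :: "enat measure \<Rightarrow> bool" where
  "poisson_distribution Q \<longleftrightarrow>
     Q = return (count_space UNIV) \<infinity> \<or>
     (\<exists>c::real. c \<ge> 0 \<and> (\<forall>k::nat. emeasure Q {enat k} = ennreal (c ^ k / fact k * exp (- c))))"

definition poisson_process :: "'b measure \<Rightarrow> 'a measure \<Rightarrow> ('b \<Rightarrow> 'a set) \<Rightarrow> bool" where
  "poisson_process P M \<pi> \<longleftrightarrow> cr_set P M \<pi> \<and> independent_increments P M \<pi> \<and>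
     (\<forall>A\<in>sets M. poisson_distribution (distr P (count_space UNIV) (\<lambda>\<omega>. Ncount A (\<pi> \<omega>))))"

end

theory Submission
  imports Defs
begin

lemma sep_family_aux:
  assumes "E \<in> sigma_sets (space M \<times> space M) {a \<times> b | a b. a \<in> sets M \<and> b \<in> sets M}"
  shows "\<exists>R::nat \<Rightarrow> 'a set. (\<forall>i. R i \<in> sets M) \<and>
     (\<forall>x\<in>space M. \<forall>y\<in>space M. (\<forall>i. x \<in> R i \<longleftrightarrow> y \<in> R i) \<longrightarrow> ((x,x) \<in> E \<longleftrightarrow> (y,x) \<in> E))"
  using assms
proof induct
  case (Basic a)
  then obtain u v where a: "a = u \<times> v" "u \<in> sets M" "v \<in> sets M" by blast
  show ?case by (rule exI[of _ "\<lambda>_. u"]) (simp add: a)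
next
  case Empty
  show ?case by (rule exI[of _ "\<lambda>_. {}"]) auto
next
  case (Compl a)
  then obtain R :: "nat \<Rightarrow> 'a set" where R: "\<forall>i. R i \<in> sets M" "\<forall>x\<in>space M. \<forall>y\<in>space M. (\<forall>i. x \<in> R i \<longleftrightarrow> y \<in> R i) \<longrightarrow> ((x,x) \<in> a \<longleftrightarrow> (y,x) \<in> a)" by blast
  show ?case
  proof (rule exI[of _ R], intro conjI ballI impI)
    show "\<forall>i. R i \<in> sets M" using R(1) .
    fix x y assume xy: "x \<in> space M" "y \<in> space M" "\<forall>i. x \<in> R i \<longleftrightarrow> y \<in> R i"
    have "(x,x) \<in> a \<longleftrightarrow> (y,x) \<in> a" using R(2) xy by blast
    then show "((x, x) \<in> space M \<times> space M - a) = ((y, x) \<in> space M \<times> space M - a)"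
      using xy(1,2) by blast
  qed
next
  case (Union F)
  have "\<forall>n. \<exists>R::nat \<Rightarrow> 'a set. (\<forall>i. R i \<in> sets M) \<and> (\<forall>x\<in>space M. \<forall>y\<in>space M. (\<forall>i. x \<in> R i \<longleftrightarrow> y \<in> R i) \<longrightarrow> ((x,x) \<in> F n \<longleftrightarrow> (y,x) \<in> F n))"
    using Union(2) by blast
  from choice[OF this] obtain R :: "nat \<Rightarrow> nat \<Rightarrow> 'a set" where R: "\<And>n. (\<forall>i. R n i \<in> sets M) \<and> (\<forall>x\<in>space M. \<forall>y\<in>space M. (\<forall>i. x \<in> R n i \<longleftrightarrow> y \<in> R n i) \<longrightarrow> ((x,x) \<in> F n \<longleftrightarrow> (y,x) \<in> F n))"
    by blast
  define R' where "R' k = R (fst (prod_decode k)) (snd (prod_decode k))" for k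
  have 1: "\<forall>i. R' i \<in> sets M" using R by (auto simp: R'_def)
  have 2: "(\<forall>i. x \<in> R n i \<longleftrightarrow> y \<in> R n i)" if "\<forall>i. x \<in> R' i \<longleftrightarrow> y \<in> R' i" for x y n
  proof
    fix i show "x \<in> R n i \<longleftrightarrow> y \<in> R n i"
      using that[rule_format, of "prod_encode (n,i)"] by (simp add: R'_def)
  qed
  show ?case
  proof (rule exI[of _ R'], intro conjI 1 ballI impI)
    fix x y assume xy: "x \<in> space M" "y \<in> space M" "\<forall>i. x \<in> R' i \<longleftrightarrow> y \<in> R' i"
    have "(x,x) \<in> F n \<longleftrightarrow> (y,x) \<in> F n" for n
      using conjunct2[OF R[of n], rule_format, OF xy(1) xy(2)] 2[OF xy(3)] by blast
    then show "((x, x) \<in> \<Union> (range F)) = ((y, x) \<in> \<Union> (range F))" by blast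
  qed
qed

lemma sep_family:
  assumes "{(x, x) | x. x \<in> space M} \<in> sets (M \<Otimes>\<^sub>M M)"
  shows "\<exists>B::nat \<Rightarrow> 'a set. (\<forall>i. B i \<in> sets M) \<and>
     (\<forall>x\<in>space M. \<forall>y\<in>space M. (\<forall>i. x \<in> B i \<longleftrightarrow> y \<in> B i) \<longrightarrow> x = y)"
proof -
  define D where "D = {(x, x) | x. x \<in> space M}"
  from sep_family_aux[OF assms[folded D_def, unfolded sets_pair_measure]]
  obtain R :: "nat \<Rightarrow> 'a set" where R: "\<forall>i. R i \<in> sets M" "\<forall>x\<in>space M. \<forall>y\<in>space M. (\<forall>i. x \<in> R i \<longleftrightarrow> y \<in> R i) \<longrightarrow> ((x,x) \<in> D \<longleftrightarrow> (y,x) \<in> D)"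
    by blast
  show ?thesis
  proof (rule exI[of _ R], intro conjI ballI impI)
    show "\<forall>i. R i \<in> sets M" using R(1) .
    fix x y assume xy: "x \<in> space M" "y \<in> space M" "\<forall>i. x \<in> R i \<longleftrightarrow> y \<in> R i"
    have "(x,x) \<in> D" using xy by (simp add: D_def)
    then have "(y,x) \<in> D" using R(2) xy by blast
    then show "x = y" by (simp add: D_def)
  qed
qed

lemma (in prob_space) indep_sets_reindex:
  assumes "inj_on f K" "indep_sets (\<lambda>k. F (f k)) K"
  shows "indep_sets F (f ` K)"
  unfolding indep_sets_def
proof (intro conjI ballI allI impI)
  fix i assume "i \<in> f ` K"
  then show "F i \<subseteq> events" using assms(2) unfolding indep_sets_def by auto
next
  fix J A assume J: "J \<subseteq> f ` K" "J \<noteq> {}" "finite J" and A: "A \<in> Pi J F"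
  define J' where "J' = f -` J \<inter> K"
  have im: "f ` J' = J" using J(1) by (auto simp: J'_def)
  have inj: "inj_on f J'" using assms(1) by (rule inj_on_subset) (auto simp: J'_def)
  have fin: "finite J'" using J(3) im inj finite_imageD by blast
  have ne: "J' \<noteq> {}" using J(2) im by auto
  have "prob (\<Inter>j\<in>J'. A (f j)) = (\<Prod>j\<in>J'. prob (A (f j)))"
    using assms(2) unfolding indep_sets_def
    apply (elim conjE)
    apply (drule spec[of _ J'])
    using fin ne A im by (auto simp: J'_def)
  moreover have "(\<Inter>j\<in>J'. A (f j)) = (\<Inter>j\<in>J. A j)" using im by auto
  moreover have "(\<Prod>j\<in>J'. prob (A (f j))) = (\<Prod>j\<in>J. prob (A j))"
    using prod.reindex[OF inj, of "\<lambda>j. prob (A j)"] im by simp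
  ultimately show "prob (\<Inter>j\<in>J. A j) = (\<Prod>j\<in>J. prob (A j))" by simp
qed

lemma (in prob_space) indep_vars_reindex:
  assumes "inj_on f K" "indep_vars (\<lambda>k. M' (f k)) (\<lambda>k. X (f k)) K"
  shows "indep_vars M' X (f ` K)"
  using assms(2) unfolding indep_vars_def2
  by (auto intro!: indep_sets_reindex[OF assms(1)])

lemma space_CS: "space (CS M) = countable_subsets M"
  unfolding CS_def by (rule space_measure_of_conv)

locale cr_proc = prob_space P for P :: "'b measure" +
  fixes M :: "'a measure" and \<pi> :: "'b \<Rightarrow> 'a set"
  assumes cr: "cr_set P M \<pi>" and ii: "independent_increments P M \<pi>"
begin

lemma pi_meas: "\<pi> \<in> measurable P (CS M)" using cr unfolding cr_set_def .

lemma pi_space: "\<omega> \<in> space P \<Longrightarrow> \<pi> \<omega> \<subseteq> space M \<and> countable (\<pi> \<omega>)"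
  using measurable_space[OF pi_meas] by (auto simp: space_CS countable_subsets_def)

lemma N_meas[measurable]: "A \<in> sets M \<Longrightarrow> (\<lambda>\<omega>. Ncount A (\<pi> \<omega>)) \<in> measurable P (count_space UNIV)"
proof (rule measurableI)
  fix B :: "enat set" assume A: "A \<in> sets M"
  define G where "G = {X \<in> countable_subsets M. Ncount A X \<in> B}"
  have "G \<in> sets (CS M)" unfolding CS_def G_def
    by (subst sets_measure_of) (use A in \<open>auto simp: countable_subsets_def intro!: sigma_sets.Basic\<close>)
  from measurable_sets[OF pi_meas this]
  have "\<pi> -` G \<inter> space P \<in> sets P" .
  moreover have "\<pi> -` G \<inter> space P = (\<lambda>\<omega>. Ncount A (\<pi> \<omega>)) -` B \<inter> space P"
    using pi_space by (auto simp: G_def countable_subsets_def)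
  ultimately show "(\<lambda>\<omega>. Ncount A (\<pi> \<omega>)) -` B \<inter> space P \<in> sets P" by simp
qed simp

lemma indep_fin:
  assumes "finite I" "\<And>i. i \<in> I \<Longrightarrow> D i \<in> sets M" "disjoint_family_on D I"
  shows "indep_vars (\<lambda>_. count_space UNIV) (\<lambda>i \<omega>. Ncount (D i) (\<pi> \<omega>)) I"
proof -
  obtain h where h: "bij_betw h {0..<card I} I" using ex_bij_betw_nat_finite[OF assms(1)] by blast
  have "indep_vars (\<lambda>_. count_space UNIV) (\<lambda>k \<omega>. Ncount (D (h k)) (\<pi> \<omega>)) {..<card I}"
    using ii unfolding independent_increments_def
    apply (elim allE[of _ "card I"] allE[of _ "\<lambda>k. D (h k)"])
    apply (erule mp)
  proof (intro conjI allI impI)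
    have hI: "h k \<in> I" if "k < card I" for k using h that by (auto simp: bij_betw_def atLeast0LessThan)
    have hinj: "h k = h l \<Longrightarrow> k < card I \<Longrightarrow> l < card I \<Longrightarrow> k = l" for k l
      using h by (auto simp: bij_betw_def atLeast0LessThan inj_on_def)
    show "D (h i) \<in> sets M" if "i < card I" for i using hI[OF that] assms(2) by blast
    show "disjoint_family_on (\<lambda>k. D (h k)) {..<card I}"
      unfolding disjoint_family_on_def
    proof (intro ballI impI)
      fix k l assume "k \<in> {..<card I}" "l \<in> {..<card I}" "k \<noteq> l"
      then have "h k \<noteq> h l" "h k \<in> I" "h l \<in> I" using hI hinj by auto
      then show "D (h k) \<inter> D (h l) = {}"
        using assms(3) unfolding disjoint_family_on_def by auto
    qed
  qed
  then have "indep_vars (\<lambda>_. count_space UNIV) (\<lambda>i \<omega>. Ncount (D i) (\<pi> \<omega>)) (h ` {..<card I})"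
    using h by (intro indep_vars_reindex) (auto simp: bij_betw_def atLeast0LessThan)
  then show ?thesis using h by (simp add: bij_betw_def atLeast0LessThan)
qed

lemma indep_all:
  assumes "\<And>i. i \<in> I \<Longrightarrow> D i \<in> sets M" "disjoint_family_on D I"
  shows "indep_vars (\<lambda>_. count_space UNIV) (\<lambda>i \<omega>. Ncount (D i) (\<pi> \<omega>)) I"
proof -
  have "indep_vars (\<lambda>_. count_space UNIV) (\<lambda>i \<omega>. Ncount (D i) (\<pi> \<omega>)) J" if "J \<subseteq> I" "finite J" for J
    using that assms by (intro indep_fin) (auto simp: disjoint_family_on_def subset_iff)
  then show ?thesis
    unfolding indep_vars_def2 using assms(1)
    by (subst indep_sets_finite_index_sets) (auto simp: N_meas)
qed

end

definition zp :: "real \<Rightarrow> enat \<Rightarrow> real" where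
  "zp z e = (case e of enat k \<Rightarrow> z ^ k | \<infinity> \<Rightarrow> 0)"

lemma Ncount_eq_0: "Ncount D X = 0 \<longleftrightarrow> D \<inter> X = {}"
  by (auto simp: Ncount_def zero_enat_def)

locale sep_space =
  fixes M :: "'a measure" and B :: "nat \<Rightarrow> 'a set" and A :: "'a set"
  assumes B: "\<And>i. B i \<in> sets M"
    and sep: "\<And>x y. x \<in> space M \<Longrightarrow> y \<in> space M \<Longrightarrow> (\<And>i. x \<in> B i \<longleftrightarrow> y \<in> B i) \<Longrightarrow> x = y"
    and A: "A \<in> sets M"
begin

definition code :: "nat \<Rightarrow> 'a \<Rightarrow> bool list" where
  "code m x = map (\<lambda>i. x \<in> B i) [0..<m]"

definition cell :: "bool list \<Rightarrow> 'a set" where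
  "cell bs = {x \<in> A. code (length bs) x = bs}"

definition L :: "nat \<Rightarrow> bool list set" where
  "L m = {bs. length bs = m}"

lemma finite_L: "finite (L m)"
  using finite_lists_length_eq[of "UNIV :: bool set" m] by (simp add: L_def)

lemma length_code[simp]: "length (code m x) = m" by (simp add: code_def)

lemma code_L: "code m ` Y \<subseteq> L m" by (auto simp: L_def)

lemma finite_code_image: "finite (code m ` Y)"
  using finite_subset[OF code_L finite_L] .

lemma code_eq: "code (length bs) x = bs \<longleftrightarrow> (\<forall>i<length bs. (x \<in> B i) = bs ! i)"
  unfolding code_def list_eq_iff_nth_eq by simp

lemma cell_alt: "cell bs = {x \<in> A. \<forall>i<length bs. (x \<in> B i) = bs ! i}"
  unfolding cell_def code_eq ..

lemma A_space: "A \<subseteq> space M" using sets.sets_into_space[OF A] .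

lemma cell_sets: "cell bs \<in> sets M"
proof -
  have "cell bs = A \<inter> (\<Inter>i\<in>{..<length bs}. (if bs ! i then B i else space M - B i))"
    using A_space by (auto simp: cell_alt split: if_splits)
  also have "\<dots> \<in> sets M"
  proof (cases "length bs = 0")
    case True then show ?thesis using A by simp
  next
    case False
    have "(if bs ! i then B i else space M - B i) \<in> sets M" for i
      using B[of i] by simp
    then have "(\<Inter>i\<in>{..<length bs}. (if bs ! i then B i else space M - B i)) \<in> sets M"
      using False by (intro sets.finite_INT) auto
    then show ?thesis using A by (rule sets.Int[rotated])
  qed
  finally show ?thesis .
qed

lemma cell_sub: "cell bs \<subseteq> A" by (auto simp: cell_def)

lemma cell_disj: "length bs = length bs' \<Longrightarrow> bs \<noteq> bs' \<Longrightarrow> cell bs \<inter> cell bs' = {}"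
  by (auto simp: cell_def)

lemma cell_meets: "bs \<in> L m \<Longrightarrow> (cell bs \<inter> X \<noteq> {}) \<longleftrightarrow> bs \<in> code m ` (X \<inter> A)"
proof
  assume "bs \<in> L m" "cell bs \<inter> X \<noteq> {}"
  then obtain x where "x \<in> X" "x \<in> A" "code m x = bs" by (auto simp: cell_def L_def)
  then show "bs \<in> code m ` (X \<inter> A)" by (intro image_eqI[of _ _ x]) auto
next
  assume "bs \<in> L m" "bs \<in> code m ` (X \<inter> A)"
  then show "cell bs \<inter> X \<noteq> {}" by (auto simp: cell_def L_def)
qed

lemma code_sep_eventually:
  assumes "x \<in> space M" "y \<in> space M" "x \<noteq> y"
  shows "eventually (\<lambda>m. code m x \<noteq> code m y) sequentially"
proof -
  obtain i where i: "(x \<in> B i) \<noteq> (y \<in> B i)" using sep[OF assms(1,2)] assms(3) by blast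
  show ?thesis unfolding eventually_sequentially
  proof (intro exI[of _ "Suc i"] allI impI)
    fix m assume "Suc i \<le> m"
    then have "code m x ! i \<noteq> code m y ! i" using i by (simp add: code_def)
    then show "code m x \<noteq> code m y" by metis
  qed
qed

lemma inj_eventually:
  assumes "finite F" "F \<subseteq> space M"
  shows "eventually (\<lambda>m. inj_on (code m) F) sequentially"
proof -
  have "eventually (\<lambda>m. \<forall>p\<in>F \<times> F. fst p \<noteq> snd p \<longrightarrow> code m (fst p) \<noteq> code m (snd p)) sequentially"
  proof (rule eventually_ball_finite)
    show "finite (F \<times> F)" using assms(1) by simp
    show "\<forall>p\<in>F \<times> F. eventually (\<lambda>m. fst p \<noteq> snd p \<longrightarrow> code m (fst p) \<noteq> code m (snd p)) sequentially"
    proof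
      fix p assume p: "p \<in> F \<times> F"
      show "eventually (\<lambda>m. fst p \<noteq> snd p \<longrightarrow> code m (fst p) \<noteq> code m (snd p)) sequentially"
      proof (cases "fst p = snd p")
        case False
        have "fst p \<in> space M" "snd p \<in> space M" using p assms(2) by auto
        from code_sep_eventually[OF this False] show ?thesis by (rule eventually_mono) simp
      qed simp
    qed
  qed
  then show ?thesis
    by (rule eventually_mono) (auto simp: inj_on_def)
qed

lemma card_code_le: "finite Y \<Longrightarrow> card (code m ` Y) \<le> card Y"
  by (rule card_image_le)

lemma card_code_fin:
  assumes "finite Y" "Y \<subseteq> space M"
  shows "eventually (\<lambda>m. card (code m ` Y) = card Y) sequentially"
  using inj_eventually[OF assms] by (rule eventually_mono) (simp add: card_image)

lemma card_code_inf:
  assumes "infinite Y" "Y \<subseteq> space M"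
  shows "eventually (\<lambda>m. k \<le> card (code m ` Y)) sequentially"
proof -
  obtain F where F: "finite F" "card F = k" "F \<subseteq> Y" using infinite_arbitrarily_large[OF assms(1)] by blast
  have "eventually (\<lambda>m. inj_on (code m) F) sequentially"
    using F(3) assms(2) by (intro inj_eventually[OF F(1)]) (rule subset_trans)
  then show ?thesis
  proof (rule eventually_mono)
    fix m assume "inj_on (code m) F"
    then have "card (code m ` F) = k" using F by (simp add: card_image)
    moreover have "card (code m ` F) \<le> card (code m ` Y)"
      using F(3) finite_code_image by (intro card_mono) auto
    ultimately show "k \<le> card (code m ` Y)" by simp
  qed
qed

lemma zp_lim:
  assumes "X \<subseteq> space M" "0 \<le> z" "z < 1"
  shows "(\<lambda>m. z ^ card (code m ` (X \<inter> A))) \<longlonglongrightarrow> zp z (Ncount A X)"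
proof (cases "finite (A \<inter> X)")
  case True
  then have fin: "finite (X \<inter> A)" by (simp add: Int_commute)
  have sub: "X \<inter> A \<subseteq> space M" using assms(1) by auto
  have eq: "zp z (Ncount A X) = z ^ card (X \<inter> A)"
    using True by (simp add: Ncount_def zp_def Int_commute)
  from card_code_fin[OF fin sub]
  have "eventually (\<lambda>m. z ^ card (code m ` (X \<inter> A)) = zp z (Ncount A X)) sequentially"
    unfolding eq by (rule eventually_mono) simp
  then show ?thesis by (rule tendsto_eventually)
next
  case False
  then have inf: "infinite (X \<inter> A)" by (simp add: Int_commute)
  have "filterlim (\<lambda>m. card (code m ` (X \<inter> A))) at_top sequentially"
    unfolding filterlim_at_top
  proof
    fix k
    show "eventually (\<lambda>m. k \<le> card (code m ` (X \<inter> A))) sequentially"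
      by (rule card_code_inf[OF inf]) (use assms(1) in auto)
  qed
  from filterlim_compose[OF LIMSEQ_power_zero[of z] this]
  show ?thesis using assms False by (simp add: Ncount_def zp_def)
qed

lemma prod_code:
  "(\<Prod>bs\<in>L m. (if bs \<in> code m ` Y then z else 1)) = (z::real) ^ card (code m ` Y)"
proof -
  have "(\<Prod>bs\<in>L m. (if bs \<in> code m ` Y then z else 1)) = (\<Prod>bs\<in>L m \<inter> code m ` Y. z)"
    by (rule prod.inter_restrict[symmetric, OF finite_L])
  also have "L m \<inter> code m ` Y = code m ` Y" using code_L by blast
  finally show ?thesis by simp
qed

end

locale main = cr_proc P M \<pi> + sep_space M B A
  for P :: "'b measure" and M :: "'a measure" and \<pi> :: "'b \<Rightarrow> 'a set" and B A +
  assumes noatom: "\<And>x. x \<in> space M \<Longrightarrow> prob {\<omega> \<in> space P. x \<in> \<pi> \<omega>} = 0"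
begin

definition pr :: "bool list \<Rightarrow> real" where
  "pr bs = prob {\<omega> \<in> space P. Ncount (cell bs) (\<pi> \<omega>) \<noteq> 0}"

definition lam :: "nat \<Rightarrow> real" where
  "lam m = (\<Sum>bs\<in>L m. pr bs)"

definition Pm :: "real \<Rightarrow> nat \<Rightarrow> real" where
  "Pm t m = (\<Prod>bs\<in>L m. (1 - t * pr bs))"

definition G :: "real \<Rightarrow> real" where
  "G z = expectation (\<lambda>\<omega>. zp z (Ncount A (\<pi> \<omega>)))"

lemma ev_meas: "D \<in> sets M \<Longrightarrow> {\<omega> \<in> space P. Q (Ncount D (\<pi> \<omega>))} \<in> sets P"
proof -
  assume D: "D \<in> sets M"
  have "(\<lambda>\<omega>. Ncount D (\<pi> \<omega>)) -` {e. Q e} \<inter> space P \<in> sets P"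
    by (rule measurable_sets[OF N_meas[OF D]]) simp
  moreover have "(\<lambda>\<omega>. Ncount D (\<pi> \<omega>)) -` {e. Q e} \<inter> space P = {\<omega> \<in> space P. Q (Ncount D (\<pi> \<omega>))}"
    by auto
  ultimately show ?thesis by simp
qed

lemma pr_nonneg: "0 \<le> pr bs" by (simp add: pr_def)
lemma pr_le1: "pr bs \<le> 1" by (simp add: pr_def)

lemma lam_nonneg: "0 \<le> lam m" unfolding lam_def by (intro sum_nonneg pr_nonneg)

lemma zpow_prod:
  fixes z :: real
  assumes "\<omega> \<in> space P"
  shows "z ^ card (code m ` (\<pi> \<omega> \<inter> A)) =
    (\<Prod>bs\<in>L m. (if Ncount (cell bs) (\<pi> \<omega>) = 0 then 1 else z))"
proof -
  have "(\<Prod>bs\<in>L m. (if Ncount (cell bs) (\<pi> \<omega>) = 0 then 1 else z)) =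
        (\<Prod>bs\<in>L m. (if bs \<in> code m ` (\<pi> \<omega> \<inter> A) then z else 1))"
  proof (rule prod.cong[OF refl])
    fix bs assume "bs \<in> L m"
    then show "(if Ncount (cell bs) (\<pi> \<omega>) = 0 then 1 else z) = (if bs \<in> code m ` (\<pi> \<omega> \<inter> A) then z else 1)"
      using cell_meets[of bs m "\<pi> \<omega>"] by (auto simp: Ncount_eq_0)
  qed
  then show ?thesis using prod_code[of m "\<pi> \<omega> \<inter> A" z] by simp
qed

lemma E_cell:
  fixes z :: real
  shows "expectation (\<lambda>\<omega>. if Ncount (cell bs) (\<pi> \<omega>) = 0 then 1 else z) = 1 - (1 - z) * pr bs"
proof -
  define E where "E = {\<omega> \<in> space P. Ncount (cell bs) (\<pi> \<omega>) \<noteq> 0}"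
  have E: "E \<in> sets P" unfolding E_def by (rule ev_meas[OF cell_sets])
  have "expectation (\<lambda>\<omega>. if Ncount (cell bs) (\<pi> \<omega>) = 0 then 1 else z) =
        expectation (\<lambda>\<omega>. 1 - (1 - z) * indicator E \<omega>)"
    by (rule Bochner_Integration.integral_cong) (auto simp: E_def indicator_def)
  also have "\<dots> = expectation (\<lambda>\<omega>. 1) - expectation (\<lambda>\<omega>. (1 - z) * indicator E \<omega>)"
  proof (intro Bochner_Integration.integral_diff)
    have "integrable P (indicator E :: 'b \<Rightarrow> real)"
      by (rule integrable_real_indicator[OF E]) (simp add: less_top[symmetric])
    then show "integrable P (\<lambda>\<omega>. (1 - z) * indicator E \<omega>)" by simp
  qed simp
  also have "\<dots> = 1 - (1 - z) * prob E"
    using E by (simp add: prob_space)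
  finally show ?thesis by (simp add: pr_def E_def)
qed

lemma E_prod:
  fixes z :: real
  shows "expectation (\<lambda>\<omega>. z ^ card (code m ` (\<pi> \<omega> \<inter> A))) = Pm (1 - z) m"
proof -
  have ind: "indep_vars (\<lambda>_. count_space UNIV) (\<lambda>bs \<omega>. Ncount (cell bs) (\<pi> \<omega>)) (L m)"
    by (rule indep_fin[OF finite_L cell_sets]) (simp add: disjoint_family_on_def L_def cell_disj)
  have ind2: "indep_vars (\<lambda>_. borel) (\<lambda>bs \<omega>. (\<lambda>e. if e = 0 then 1 else z :: real) (Ncount (cell bs) (\<pi> \<omega>))) (L m)"
    by (rule indep_vars_compose2[OF ind]) simp
  have int: "integrable P (\<lambda>\<omega>. (\<lambda>e. if e = 0 then 1 else z :: real) (Ncount (cell bs) (\<pi> \<omega>)))" for bs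
  proof (rule integrable_const_bound[where B="max 1 \<bar>z\<bar>"])
    show "AE x in P. norm (if Ncount (cell bs) (\<pi> x) = 0 then 1 else z) \<le> max 1 \<bar>z\<bar>" by auto
    show "(\<lambda>\<omega>. if Ncount (cell bs) (\<pi> \<omega>) = 0 then 1 else z) \<in> borel_measurable P"
      using measurable_compose[OF N_meas[OF cell_sets[of bs]], of "\<lambda>e. if e = 0 then 1 else z" borel]
      by simp
  qed
  have "expectation (\<lambda>\<omega>. z ^ card (code m ` (\<pi> \<omega> \<inter> A))) =
        expectation (\<lambda>\<omega>. \<Prod>bs\<in>L m. (\<lambda>e. if e = 0 then 1 else z :: real) (Ncount (cell bs) (\<pi> \<omega>)))"
    by (rule Bochner_Integration.integral_cong[OF refl]) (simp add: zpow_prod)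
  also have "\<dots> = (\<Prod>bs\<in>L m. expectation (\<lambda>\<omega>. (\<lambda>e. if e = 0 then 1 else z :: real) (Ncount (cell bs) (\<pi> \<omega>))))"
    by (rule indep_vars_lebesgue_integral[OF finite_L ind2 int])
  also have "\<dots> = Pm (1 - z) m"
    unfolding Pm_def using E_cell by simp
  finally show ?thesis .
qed

lemma G_lim:
  assumes "0 \<le> z" "z < 1"
  shows "(\<lambda>m. Pm (1 - z) m) \<longlonglongrightarrow> G z"
proof -
  have zp_meas: "(\<lambda>\<omega>. zp z (Ncount A (\<pi> \<omega>))) \<in> borel_measurable P"
    using measurable_compose[OF N_meas[OF A], of "zp z" borel] by simp
  have s_meas: "(\<lambda>\<omega>. z ^ card (code m ` (\<pi> \<omega> \<inter> A))) \<in> borel_measurable P" for m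
  proof -
    have "(\<lambda>\<omega>. z ^ card (code m ` (\<pi> \<omega> \<inter> A))) \<in> borel_measurable P \<longleftrightarrow>
          (\<lambda>\<omega>. \<Prod>bs\<in>L m. (\<lambda>e. if e = 0 then 1 else z :: real) (Ncount (cell bs) (\<pi> \<omega>))) \<in> borel_measurable P"
      by (rule measurable_cong) (simp add: zpow_prod)
    moreover have "(\<lambda>\<omega>. \<Prod>bs\<in>L m. (\<lambda>e. if e = 0 then 1 else z :: real) (Ncount (cell bs) (\<pi> \<omega>))) \<in> borel_measurable P"
    proof (rule borel_measurable_prod)
      fix bs show "(\<lambda>\<omega>. (\<lambda>e. if e = 0 then 1 else z :: real) (Ncount (cell bs) (\<pi> \<omega>))) \<in> borel_measurable P"
        using measurable_compose[OF N_meas[OF cell_sets[of bs]], of "\<lambda>e. if e = 0 then 1 else z" borel]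
        by simp
    qed
    ultimately show ?thesis by simp
  qed
  have "(\<lambda>m. expectation (\<lambda>\<omega>. z ^ card (code m ` (\<pi> \<omega> \<inter> A)))) \<longlonglongrightarrow> G z"
    unfolding G_def
  proof (rule integral_dominated_convergence[where w="\<lambda>_. 1"])
    show "AE x in P. (\<lambda>m. z ^ card (code m ` (\<pi> x \<inter> A))) \<longlonglongrightarrow> zp z (Ncount A (\<pi> x))"
      using zp_lim[of _ z] pi_space assms by auto
    show "AE x in P. norm (z ^ card (code m ` (\<pi> x \<inter> A))) \<le> 1" for m
      using assms by (auto simp: power_le_one)
  qed (use zp_meas s_meas in auto)
  then show ?thesis using E_prod by simp
qed

end

lemma one_minus_ge_exp:
  fixes x :: real assumes "0 \<le> x" "x \<le> 1/2"
  shows "exp (- x - 2 * x\<^sup>2) \<le> 1 - x"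
proof -
  have "exp (- x - 2 * x\<^sup>2) \<le> exp (ln (1 - x))"
    using ln_one_minus_pos_lower_bound[OF assms] by simp
  also have "\<dots> = 1 - x" using assms by simp
  finally show ?thesis .
qed

lemma prod_upper:
  fixes p :: "'i \<Rightarrow> real"
  assumes "finite S" "\<And>i. i \<in> S \<Longrightarrow> 0 \<le> p i \<and> p i \<le> 1" "0 \<le> t" "t \<le> 1"
  shows "(\<Prod>i\<in>S. (1 - t * p i)) \<le> exp (- t * (\<Sum>i\<in>S. p i))"
proof -
  have "(\<Prod>i\<in>S. (1 - t * p i)) \<le> (\<Prod>i\<in>S. exp (- (t * p i)))"
  proof (rule prod_mono)
    fix i assume "i \<in> S"
    then have "t * p i \<le> 1" using assms by (simp add: mult_le_one)
    then show "0 \<le> 1 - t * p i \<and> 1 - t * p i \<le> exp (- (t * p i))"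
      using exp_ge_add_one_self[of "- (t * p i)"] by simp
  qed
  also have "\<dots> = exp (\<Sum>i\<in>S. - (t * p i))" by (simp add: exp_sum[OF assms(1)])
  also have "(\<Sum>i\<in>S. - (t * p i)) = - t * (\<Sum>i\<in>S. p i)" by (simp add: sum_distrib_left sum_negf)
  finally show ?thesis .
qed

lemma prod_lower:
  fixes p :: "'i \<Rightarrow> real"
  assumes "finite S" "\<And>i. i \<in> S \<Longrightarrow> 0 \<le> p i \<and> p i \<le> e" "0 \<le> t" "t \<le> 1" "e \<le> 1/2"
  shows "exp (- t * (\<Sum>i\<in>S. p i) - 2 * e * (\<Sum>i\<in>S. p i)) \<le> (\<Prod>i\<in>S. (1 - t * p i))"
proof -
  have "exp (- t * (\<Sum>i\<in>S. p i) - 2 * e * (\<Sum>i\<in>S. p i)) = (\<Prod>i\<in>S. exp (- (t * p i) - 2 * e * p i))"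
  proof -
    have "(\<Sum>i\<in>S. - (t * p i) - 2 * e * p i) = - t * (\<Sum>i\<in>S. p i) - 2 * e * (\<Sum>i\<in>S. p i)"
      by (simp add: sum_subtractf sum_negf sum_distrib_left)
    then show ?thesis by (simp add: exp_sum[OF assms(1), symmetric])
  qed
  also have "\<dots> \<le> (\<Prod>i\<in>S. exp (- (t * p i) - 2 * (t * p i)\<^sup>2))"
  proof (rule prod_mono)
    fix i assume i: "i \<in> S"
    have "(t * p i)\<^sup>2 = t * t * (p i * p i)" by (simp add: power2_eq_square)
    also have "\<dots> \<le> 1 * (e * p i)"
      using assms(2)[OF i] assms(3,4) by (intro mult_mono mult_le_one) auto
    finally show "0 \<le> exp (- (t * p i) - 2 * e * p i) \<and> exp (- (t * p i) - 2 * e * p i) \<le> exp (- (t * p i) - 2 * (t * p i)\<^sup>2)"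
      by simp
  qed
  also have "\<dots> \<le> (\<Prod>i\<in>S. (1 - t * p i))"
  proof (rule prod_mono)
    fix i assume i: "i \<in> S"
    have "t * p i \<le> 1 * e" using assms(2)[OF i] assms(3,4) by (intro mult_mono) auto
    then show "0 \<le> exp (- (t * p i) - 2 * (t * p i)\<^sup>2) \<and> exp (- (t * p i) - 2 * (t * p i)\<^sup>2) \<le> 1 - t * p i"
      using one_minus_ge_exp[of "t * p i"] assms(2)[OF i] assms(3,5) by simp
  qed
  finally show ?thesis .
qed

context main
begin

definition small :: bool where
  "small \<longleftrightarrow> (\<forall>e>0. eventually (\<lambda>m. \<forall>bs\<in>L m. pr bs \<le> e) sequentially)"

lemma Pm_upper: "0 \<le> t \<Longrightarrow> t \<le> 1 \<Longrightarrow> Pm t m \<le> exp (- t * lam m)"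
  unfolding Pm_def lam_def by (rule prod_upper[OF finite_L]) (auto simp: pr_nonneg pr_le1)

lemma Pm_diff:
  assumes sm: small and bd: "\<And>m. lam m \<le> K" and t: "0 \<le> t" "t \<le> 1"
  shows "(\<lambda>m. Pm t m - exp (- t * lam m)) \<longlonglongrightarrow> 0"
proof (rule LIMSEQ_I)
  fix r :: real assume r: "0 < r"
  have K: "0 \<le> K" using bd[of 0] lam_nonneg[of 0] by simp
  define e where "e = min (1/2) (r / (2 * (K + 1)))"
  have e: "0 < e" "e \<le> 1/2" "2 * e * K < r"
  proof -
    show "0 < e" using r K by (auto simp: e_def)
    show "e \<le> 1/2" unfolding e_def by (rule min.cobounded1)
    have "2 * e * K \<le> 2 * (r / (2 * (K + 1))) * K" using K by (intro mult_right_mono) (auto simp: e_def)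
    also have "\<dots> = r * (K / (K + 1))" using K by (simp add: field_simps)
    also have "\<dots> < r * 1" using K r by (intro mult_strict_left_mono) auto
    finally show "2 * e * K < r" by simp
  qed
  from sm[unfolded small_def, rule_format, OF e(1)]
  obtain N where N: "\<And>m. m \<ge> N \<Longrightarrow> \<forall>bs\<in>L m. pr bs \<le> e" by (auto simp: eventually_sequentially)
  show "\<exists>no. \<forall>n\<ge>no. norm (Pm t n - exp (- t * lam n) - 0) < r"
  proof (intro exI allI impI)
    fix m assume "N \<le> m"
    then have pe: "\<forall>bs\<in>L m. pr bs \<le> e" using N by blast
    have lo: "exp (- t * lam m - 2 * e * lam m) \<le> Pm t m"
      unfolding Pm_def lam_def
      by (rule prod_lower[OF finite_L]) (use pe t e in \<open>auto simp: pr_nonneg\<close>)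
    have up: "Pm t m \<le> exp (- t * lam m)" by (rule Pm_upper[OF t])
    have "exp (- t * lam m) - exp (- t * lam m - 2 * e * lam m) = exp (- t * lam m) * (1 - exp (- (2 * e * lam m)))"
      by (simp add: algebra_simps flip: exp_add)
    also have "\<dots> \<le> 1 * (2 * e * lam m)"
    proof (rule mult_mono)
      have "t * lam m \<ge> 0" using t lam_nonneg by simp
      then show "exp (- t * lam m) \<le> 1" by simp
      show "1 - exp (- (2 * e * lam m)) \<le> 2 * e * lam m"
        using exp_ge_add_one_self[of "- (2 * e * lam m)"] by simp
      show "0 \<le> 1 - exp (- (2 * e * lam m))" using e lam_nonneg[of m] by simp
    qed simp
    also have "\<dots> \<le> 2 * e * K" using bd[of m] e by simp
    finally have "exp (- t * lam m) - exp (- t * lam m - 2 * e * lam m) < r" using e by simp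
    then show "norm (Pm t m - exp (- t * lam m) - 0) < r" using lo up by simp
  qed
qed

lemma G_nonneg: "0 \<le> z \<Longrightarrow> 0 \<le> G z"
  unfolding G_def by (intro integral_nonneg_AE) (auto simp: zp_def split: enat.split)

lemma small_bounded:
  assumes sm: small and bd: "\<And>m. lam m \<le> K"
  shows "\<exists>c\<ge>0. \<forall>z. 0 \<le> z \<and> z < 1 \<longrightarrow> G z = exp (- (1 - z) * c)"
proof -
  have lim: "(\<lambda>m. exp (- (1 - z) * lam m)) \<longlonglongrightarrow> G z" if "0 \<le> z" "z < 1" for z :: real
  proof -
    have "(\<lambda>m. Pm (1 - z) m - (Pm (1 - z) m - exp (- (1 - z) * lam m))) \<longlonglongrightarrow> G z - 0"
      by (intro tendsto_diff G_lim Pm_diff[OF sm bd]) (use that in auto)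
    then show ?thesis by simp
  qed
  have l0: "(\<lambda>m. exp (- lam m)) \<longlonglongrightarrow> G 0" using lim[of 0] by simp
  have "exp (- K) \<le> G 0"
    by (rule LIMSEQ_le_const[OF l0]) (use bd in auto)
  then have G0: "0 < G 0" by (meson exp_gt_zero less_le_trans)
  have "(\<lambda>m. - ln (exp (- lam m))) \<longlonglongrightarrow> - ln (G 0)"
    by (intro tendsto_intros l0) (use G0 in auto)
  then have lc: "lam \<longlonglongrightarrow> - ln (G 0)" by simp
  define c where "c = - ln (G 0)"
  have c: "0 \<le> c" unfolding c_def by (rule LIMSEQ_le_const[OF lc]) (use lam_nonneg in auto)
  show ?thesis
  proof (intro exI conjI allI impI)
    fix z :: real assume z: "0 \<le> z \<and> z < 1"
    have "(\<lambda>m. exp (- (1 - z) * lam m)) \<longlonglongrightarrow> exp (- (1 - z) * c)"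
      by (intro tendsto_intros) (simp add: lc[folded c_def])
    then show "G z = exp (- (1 - z) * c)" using lim[of z] z by (metis LIMSEQ_unique)
  qed (rule c)
qed

lemma unbounded:
  assumes nb: "\<not> (\<exists>K. \<forall>m. lam m \<le> K)"
  shows "G (1/2) = 0"
proof (rule ccontr)
  assume "G (1/2) \<noteq> 0"
  then have g: "0 < G (1/2)" using G_nonneg[of "1/2"] by simp
  have "(\<lambda>m. Pm (1/2) m) \<longlonglongrightarrow> G (1/2)" using G_lim[of "1/2"] by simp
  from order_tendstoD(1)[OF this, of "G (1/2) / 2"] g
  obtain N where N: "\<And>m. m \<ge> N \<Longrightarrow> G (1/2) / 2 < Pm (1/2) m" by (auto simp: eventually_sequentially)
  have "lam m \<le> - 2 * ln (G (1/2) / 2)" if "m \<ge> N" for m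
  proof -
    have "G (1/2) / 2 < exp (- (1/2) * lam m)" using N[OF that] Pm_upper[of "1/2" m] by simp
    then have "ln (G (1/2) / 2) < - (1/2) * lam m" using g by (metis exp_gt_zero ln_exp ln_less_cancel_iff half_gt_zero)
    then show ?thesis by simp
  qed
  then have "\<forall>m. lam m \<le> max (- 2 * ln (G (1/2) / 2)) (Max (lam ` {..<N}))"
    by (metis Max_ge finite_imageI finite_lessThan image_eqI le_max_iff_disj lessThan_iff not_le)
  then show False using nb by blast
qed

end

lemma powser_unique_real:
  fixes a b :: "nat \<Rightarrow> real"
  assumes sa: "\<And>x. \<bar>x\<bar> < 1 \<Longrightarrow> summable (\<lambda>n. a n * x ^ n)"
    and sb: "\<And>x. \<bar>x\<bar> < 1 \<Longrightarrow> summable (\<lambda>n. b n * x ^ n)"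
    and eq: "\<And>x. 0 < x \<Longrightarrow> x < 1 \<Longrightarrow> (\<Sum>n. a n * x ^ n) = (\<Sum>n. b n * x ^ n)"
  shows "a n = b n"
proof -
  define c where "c n = a n - b n" for n
  have sc: "summable (\<lambda>n. c n * x ^ n)" if "\<bar>x\<bar> < 1" for x
    using summable_diff[OF sa[OF that] sb[OF that]] by (simp add: c_def algebra_simps)
  have zc: "(\<Sum>n. c n * x ^ n) = 0" if "0 < x" "x < 1" for x
  proof -
    have x: "\<bar>x\<bar> < 1" using that by simp
    have "(\<Sum>n. a n * x ^ n) - (\<Sum>n. b n * x ^ n) = (\<Sum>n. a n * x ^ n - b n * x ^ n)"
      by (rule suminf_diff[OF sa[OF x] sb[OF x]])
    also have "\<dots> = (\<Sum>n. c n * x ^ n)" by (simp add: c_def left_diff_distrib)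
    finally have "(\<Sum>n. c n * x ^ n) = (\<Sum>n. a n * x ^ n) - (\<Sum>n. b n * x ^ n)" by simp
    then show ?thesis using eq[OF that] by simp
  qed
  have "c n = 0" for n
  proof (induction n rule: less_induct)
    case (less n)
    define F where "F x = (\<Sum>j. c j * x ^ j) / x ^ n" for x :: real
    have sums: "(\<lambda>k. c (k + n) * x ^ k) sums F x" if "x \<noteq> 0" "norm x < 1" for x
    proof -
      have "(\<lambda>j. c j * x ^ j) sums (\<Sum>j. c j * x ^ j)" using sc[of x] that by (simp add: summable_sums)
      moreover have "(\<Sum>i<n. c i * x ^ i) = 0" using less by simp
      ultimately have "(\<lambda>k. c (k + n) * x ^ (k + n)) sums (\<Sum>j. c j * x ^ j)"
        using sums_iff_shift[of "\<lambda>j. c j * x ^ j" n] by simp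
      from sums_divide[OF this, of "x ^ n"]
      show ?thesis using that by (simp add: F_def power_add)
    qed
    have l1: "(F \<longlongrightarrow> c (0 + n)) (at 0)"
      by (rule powser_limit_0_strong[of 1]) (use sums in auto)
    then have l1': "(F \<longlongrightarrow> c n) (at_right 0)"
      by (simp add: filterlim_at_split)
    have "eventually (\<lambda>x. F x = 0) (at_right (0::real))"
      unfolding eventually_at_right[OF zero_less_one]
      by (rule exI[of _ 1]) (auto simp: F_def zc)
    then have l2: "(F \<longlongrightarrow> 0) (at_right 0)"
      by (rule tendsto_eventually)
    show ?case using tendsto_unique[OF _ l1' l2] by simp
  qed
  then show ?thesis by (simp add: c_def)
qed

lemma poisson_sums:
  fixes c z :: real
  shows "(\<lambda>k. (exp (- c) * c ^ k / fact k) * z ^ k) sums exp (- (1 - z) * c)"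
proof -
  have "(\<lambda>k. exp (- c) * ((z * c) ^ k /\<^sub>R fact k)) sums (exp (- c) * exp (z * c))"
    by (rule sums_mult[OF exp_converges])
  moreover have "exp (- c) * exp (z * c) = exp (- (1 - z) * c)"
    by (simp add: exp_add[symmetric] algebra_simps)
  moreover have "(\<lambda>k. exp (- c) * ((z * c) ^ k /\<^sub>R fact k)) = (\<lambda>k. (exp (- c) * c ^ k / fact k) * z ^ k)"
    by (simp add: fun_eq_iff power_mult_distrib divide_inverse ac_simps)
  ultimately show ?thesis by simp
qed

context main
begin

definition q :: "nat \<Rightarrow> real" where
  "q k = prob {\<omega> \<in> space P. Ncount A (\<pi> \<omega>) = enat k}"

lemma q_nonneg: "0 \<le> q k" and q_le1: "q k \<le> 1" by (simp_all add: q_def)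

lemma G_sums:
  assumes z: "0 \<le> z" "z < 1"
  shows "(\<lambda>k. q k * z ^ k) sums G z"
proof -
  define E where "E k = {\<omega> \<in> space P. Ncount A (\<pi> \<omega>) = enat k}" for k
  have E: "E k \<in> sets P" for k unfolding E_def by (rule ev_meas[OF A])
  define f where "f k \<omega> = z ^ k * indicator (E k) \<omega>" for k \<omega>
  have fs: "(\<lambda>k. f k \<omega>) sums zp z (Ncount A (\<pi> \<omega>))" if "\<omega> \<in> space P" for \<omega>
  proof (cases "Ncount A (\<pi> \<omega>)")
    case (enat j)
    have "(\<lambda>k. if k = j then z ^ k else 0) sums z ^ j" by (rule sums_single)
    moreover have "(\<lambda>k. f k \<omega>) = (\<lambda>k. if k = j then z ^ k else 0)"
      using that enat by (auto simp: fun_eq_iff f_def E_def indicator_def)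
    ultimately show ?thesis using enat by (simp add: zp_def)
  next
    case infinity
    then have "(\<lambda>k. f k \<omega>) = (\<lambda>k. 0)"
      by (auto simp: fun_eq_iff f_def E_def indicator_def)
    then show ?thesis using infinity by (simp add: zp_def)
  qed
  have f_nonneg: "0 \<le> f k \<omega>" for k \<omega> using z by (simp add: f_def)
  have f_int: "integrable P (f k)" for k
  proof -
    have "integrable P (indicator (E k) :: 'b \<Rightarrow> real)"
      by (rule integrable_real_indicator[OF E]) (simp add: less_top[symmetric])
    then show ?thesis unfolding f_def by simp
  qed
  have "(\<lambda>n. expectation (\<lambda>\<omega>. \<Sum>k<n. f k \<omega>)) \<longlonglongrightarrow> G z"
    unfolding G_def
  proof (rule integral_dominated_convergence[where w="\<lambda>_. 1"])
    show "(\<lambda>\<omega>. zp z (Ncount A (\<pi> \<omega>))) \<in> borel_measurable P"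
      using measurable_compose[OF N_meas[OF A], of "zp z" borel] by simp
    show "(\<lambda>\<omega>. \<Sum>k<n. f k \<omega>) \<in> borel_measurable P" for n
      using f_int by (intro borel_measurable_sum) auto
    show "AE x in P. (\<lambda>n. \<Sum>k<n. f k x) \<longlonglongrightarrow> zp z (Ncount A (\<pi> x))"
      using fs by (auto simp: sums_def)
    show "AE x in P. norm (\<Sum>k<n. f k x) \<le> 1" for n
    proof (rule AE_I2)
      fix \<omega> assume \<omega>: "\<omega> \<in> space P"
      have "(\<Sum>k<n. f k \<omega>) \<le> (\<Sum>k. f k \<omega>)"
        using fs[OF \<omega>] f_nonneg by (intro sum_le_suminf) (auto simp: sums_iff)
      also have "\<dots> = zp z (Ncount A (\<pi> \<omega>))" using fs[OF \<omega>] by (simp add: sums_iff)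
      also have "\<dots> \<le> 1" using z by (auto simp: zp_def power_le_one split: enat.split)
      finally show "norm (\<Sum>k<n. f k \<omega>) \<le> 1" using f_nonneg by (simp add: sum_nonneg)
    qed
  qed simp
  moreover have "expectation (\<lambda>\<omega>. \<Sum>k<n. f k \<omega>) = (\<Sum>k<n. q k * z ^ k)" for n
  proof -
    have "expectation (\<lambda>\<omega>. \<Sum>k<n. f k \<omega>) = (\<Sum>k<n. expectation (f k))"
      by (rule Bochner_Integration.integral_sum) (use f_int in auto)
    also have "\<dots> = (\<Sum>k<n. q k * z ^ k)"
    proof (rule sum.cong[OF refl])
      fix k
      have "E k \<inter> space P = E k" by (auto simp: E_def)
      moreover have "expectation (f k) = z ^ k * prob (E k \<inter> space P)" unfolding f_def by simp
      ultimately show "expectation (f k) = q k * z ^ k" by (simp add: q_def E_def)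
    qed
    finally show ?thesis .
  qed
  ultimately show ?thesis by (simp add: sums_def)
qed

lemma q_summable: "\<bar>x\<bar> < 1 \<Longrightarrow> summable (\<lambda>n. q n * x ^ n)"
proof (rule summable_comparison_test)
  assume "\<bar>x\<bar> < 1"
  then show "summable (\<lambda>n. \<bar>x\<bar> ^ n)" by (simp add: summable_geometric)
  show "\<exists>N. \<forall>n\<ge>N. norm (q n * x ^ n) \<le> \<bar>x\<bar> ^ n"
  proof (intro exI allI impI)
    fix n :: nat
    have "norm (q n * x ^ n) = q n * \<bar>x\<bar> ^ n" by (simp add: abs_mult power_abs q_nonneg)
    also have "\<dots> \<le> \<bar>x\<bar> ^ n" by (rule mult_left_le_one_le) (simp_all add: q_nonneg q_le1)
    finally show "norm (q n * x ^ n) \<le> \<bar>x\<bar> ^ n" .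
  qed
qed

lemma q_poisson:
  assumes c: "\<And>z. 0 \<le> z \<Longrightarrow> z < 1 \<Longrightarrow> G z = exp (- (1 - z) * c)"
  shows "q k = exp (- c) * c ^ k / fact k"
proof (rule powser_unique_real[of q "\<lambda>k. exp (- c) * c ^ k / fact k"])
  show "summable (\<lambda>n. q n * x ^ n)" if "\<bar>x\<bar> < 1" for x using q_summable that .
  show "summable (\<lambda>n. exp (- c) * c ^ n / fact n * x ^ n)" for x
    using poisson_sums[of c x] by (simp add: sums_iff)
  fix x :: real assume x: "0 < x" "x < 1"
  then show "(\<Sum>n. q n * x ^ n) = (\<Sum>n. exp (- c) * c ^ n / fact n * x ^ n)"
    using G_sums[of x] poisson_sums[of c x] c[of x] by (simp add: sums_iff)
qed

lemma q_sum_fin: "(\<lambda>k. q k) sums prob {\<omega> \<in> space P. Ncount A (\<pi> \<omega>) \<noteq> \<infinity>}"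
proof -
  define E where "E k = {\<omega> \<in> space P. Ncount A (\<pi> \<omega>) = enat k}" for k
  have "range E \<subseteq> sets P" unfolding E_def using ev_meas[OF A] by auto
  moreover have "disjoint_family E" by (auto simp: disjoint_family_on_def E_def)
  ultimately have "(\<lambda>k. prob (E k)) sums prob (\<Union>k. E k)" by (rule finite_measure_UNION)
  moreover have "(\<Union>k. E k) = {\<omega> \<in> space P. Ncount A (\<pi> \<omega>) \<noteq> \<infinity>}"
    by (auto simp: E_def)
  ultimately show ?thesis by (simp add: q_def E_def)
qed

end

lemma dec_escape:
  fixes D :: "nat \<Rightarrow> 'a set"
  assumes "y \<in> D n" "y \<notin> D (n + d)"
  shows "\<exists>j\<ge>n. y \<in> D j \<and> y \<notin> D (Suc j)"
  using assms(2)
proof (induction d)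
  case 0 then show ?case using assms(1) by simp
next
  case (Suc d)
  show ?case
  proof (cases "y \<in> D (n + d)")
    case True then show ?thesis using Suc.prems by (intro exI[of _ "n + d"]) auto
  next
    case False then show ?thesis using Suc.IH by blast
  qed
qed

context sep_space
begin

lemma cell_take: "cell bs \<subseteq> cell (take k bs)"
  unfolding cell_alt by auto

end

context main
begin

lemma pr_mono: "cell bs \<subseteq> cell bs' \<Longrightarrow> pr bs \<le> pr bs'"
  unfolding pr_def
proof (rule finite_measure_mono)
  assume "cell bs \<subseteq> cell bs'"
  then show "{\<omega> \<in> space P. Ncount (cell bs) (\<pi> \<omega>) \<noteq> 0} \<subseteq> {\<omega> \<in> space P. Ncount (cell bs') (\<pi> \<omega>) \<noteq> 0}"
    by (auto simp: Ncount_eq_0)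
  show "{\<omega> \<in> space P. Ncount (cell bs') (\<pi> \<omega>) \<noteq> 0} \<in> sets P" by (rule ev_meas[OF cell_sets])
qed

lemma pr_take: "pr bs \<le> pr (take k bs)"
  by (rule pr_mono[OF cell_take])

definition good :: "real \<Rightarrow> bool list \<Rightarrow> bool" where
  "good e s \<longleftrightarrow> (\<forall>m\<ge>length s. \<exists>s'. length s' = m \<and> take (length s) s' = s \<and> e < pr s')"

lemma good_child:
  assumes g: "good e s"
  shows "good e (s @ [True]) \<or> good e (s @ [False])"
proof (rule ccontr)
  assume "\<not> ?thesis"
  then have "\<exists>m. m \<ge> Suc (length s) \<and> (\<forall>s'. length s' = m \<and> take (Suc (length s)) s' = s @ [b] \<longrightarrow> pr s' \<le> e)" for b
    unfolding good_def by (cases b) (auto simp: not_less)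
  then obtain mb where mb: "\<And>b. mb b \<ge> Suc (length s)"
    "\<And>b s'. length s' = mb b \<Longrightarrow> take (Suc (length s)) s' = s @ [b] \<Longrightarrow> pr s' \<le> e"
    by metis
  define m where "m = max (mb True) (mb False)"
  have "m \<ge> length s" using mb(1)[of True] by (simp add: m_def)
  with g obtain s' where s': "length s' = m" "take (length s) s' = s" "e < pr s'"
    unfolding good_def by blast
  define b where "b = s' ! length s"
  have len: "length s < length s'" using s'(1) mb(1)[of True] by (simp add: m_def)
  have tk: "take (Suc (length s)) s' = s @ [b]"
    using take_Suc_conv_app_nth[OF len] s'(2) by (simp add: b_def)
  define s'' where "s'' = take (mb b) s'"
  have l'': "length s'' = mb b" using s'(1) by (cases b) (auto simp: s''_def m_def)
  have "take (Suc (length s)) s'' = s @ [b]"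
    using tk mb(1)[of b] by (simp add: s''_def min_def)
  then have "pr s'' \<le> e" using mb(2)[OF l''] by simp
  moreover have "pr s' \<le> pr s''" unfolding s''_def by (rule pr_take)
  ultimately show False using s'(3) by simp
qed

primrec br :: "real \<Rightarrow> nat \<Rightarrow> bool list" where
  "br e 0 = []"
| "br e (Suc n) = (if good e (br e n @ [True]) then br e n @ [True] else br e n @ [False])"

lemma br_len: "length (br e n) = n"
  by (induction n) auto

lemma br_good: "good e [] \<Longrightarrow> good e (br e n)"
  by (induction n) (use good_child in auto)

lemma br_take: "take n (br e (Suc n)) = br e n"
  using br_len[of e n] by simp


lemma good_pr: "good e s \<Longrightarrow> e < pr s"
  unfolding good_def by (metis order_refl take_all)

lemma not_small_good:
  assumes "\<not> small"
  shows "\<exists>e>0. good e []"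
proof -
  from assms obtain e where e: "e > 0" "\<not> eventually (\<lambda>m. \<forall>bs\<in>L m. pr bs \<le> e) sequentially"
    unfolding small_def by blast
  have "good e []" unfolding good_def
  proof (intro allI impI)
    fix m :: nat
    from e(2) obtain m' where "m' \<ge> m" "\<not> (\<forall>bs\<in>L m'. pr bs \<le> e)"
      unfolding eventually_sequentially by (meson not_le)
    then obtain bs where bs: "length bs = m'" "e < pr bs" by (auto simp: L_def not_le)
    show "\<exists>s'. length s' = m \<and> take (length []) s' = [] \<and> e < pr s'"
      using bs pr_take[of bs m] \<open>m' \<ge> m\<close> by (intro exI[of _ "take m bs"]) auto
  qed
  with e show ?thesis by blast
qed

lemma not_small_inf:
  assumes ns: "\<not> small"
  shows "AE \<omega> in P. Ncount A (\<pi> \<omega>) = \<infinity>"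
proof -
  obtain e where e: "e > 0" "good e []" using not_small_good[OF ns] by blast
  define D where "D n = cell (br e n)" for n
  have D_sets: "D n \<in> sets M" for n unfolding D_def by (rule cell_sets)
  have D_dec: "D (Suc n) \<subseteq> D n" for n
    unfolding D_def using cell_take[of "br e (Suc n)" n] br_take[of n e] by simp
  have decD: "decseq D" by (rule decseq_SucI) (rule D_dec)
  have D_A: "D n \<subseteq> A" for n unfolding D_def by (rule cell_sub)
  have pD: "e < pr (br e n)" for n using good_pr[OF br_good[OF e(2)]] .
  have D_bit: "(x \<in> B i) = br e (Suc i) ! i" if "x \<in> D (Suc i)" for x i
    using that br_len[of e "Suc i"] unfolding D_def cell_alt by auto
  have D_single: "x = y" if "x \<in> (\<Inter>n. D n)" "y \<in> (\<Inter>n. D n)" for x y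
  proof (rule sep)
    show "x \<in> space M" "y \<in> space M" using that D_A[of 0] A_space by auto
    fix i show "x \<in> B i \<longleftrightarrow> y \<in> B i" using D_bit[of x i] D_bit[of y i] that by auto
  qed
  define H where "H n = {\<omega> \<in> space P. Ncount (D n) (\<pi> \<omega>) \<noteq> 0}" for n
  have H_sets: "H n \<in> sets P" for n unfolding H_def by (rule ev_meas[OF D_sets])
  have decH: "decseq H"
    unfolding decseq_Suc_iff H_def using D_dec by (auto simp: Ncount_eq_0)
  have "(\<lambda>n. prob (H n)) \<longlonglongrightarrow> prob (\<Inter>n. H n)"
    by (rule finite_Lim_measure_decseq) (use H_sets decH in auto)
  moreover have "prob (H n) \<ge> e" for n using pD[of n] by (simp add: H_def pr_def D_def)
  ultimately have pH: "prob (\<Inter>n. H n) \<ge> e" by (intro LIMSEQ_le_const) auto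
  define Z where "Z = {\<omega> \<in> space P. Ncount (\<Inter>n. D n) (\<pi> \<omega>) \<noteq> 0}"
  have Dint_sets: "(\<Inter>n. D n) \<in> sets M" using D_sets by auto
  have Z_sets: "Z \<in> sets P" unfolding Z_def by (rule ev_meas[OF Dint_sets])
  have pZ: "prob Z = 0"
  proof (cases "(\<Inter>n. D n) = {}")
    case True then show ?thesis by (simp add: Z_def Ncount_eq_0)
  next
    case False
    then obtain x where x: "x \<in> (\<Inter>n. D n)" by blast
    then have "(\<Inter>n. D n) = {x}" using D_single by blast
    moreover have "x \<in> space M" using x D_A[of 0] A_space by auto
    ultimately show ?thesis using noatom[of x] by (simp add: Z_def Ncount_eq_0)
  qed
  define R where "R j = D j - D (Suc j)" for j
  have R_sets: "R j \<in> sets M" for j unfolding R_def using D_sets by auto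
  have R_disj: "disjoint_family R"
    unfolding disjoint_family_on_def
  proof (intro ballI impI)
    fix i j :: nat assume "i \<noteq> j"
    then have "Suc i \<le> j \<or> Suc j \<le> i" by auto
    then show "R i \<inter> R j = {}"
      using decD[unfolded decseq_def] unfolding R_def by blast
  qed
  define F where "F j = {\<omega> \<in> space P. Ncount (R j) (\<pi> \<omega>) \<noteq> 0}" for j
  have F_sets: "F j \<in> sets P" for j unfolding F_def by (rule ev_meas[OF R_sets])
  have "indep_events (\<lambda>j. {\<omega> \<in> space P. (\<lambda>x. x \<noteq> 0) (Ncount (R j) (\<pi> \<omega>))}) UNIV"
    by (rule indep_eventsI_indep_vars[OF indep_all[OF R_sets R_disj]]) simp
  then have indF: "indep_events F UNIV" unfolding F_def by simp
  define T where "T = (\<Inter>n. \<Union>m\<in>{n..}. F m)"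
  have T_sets: "T \<in> sets P" unfolding T_def using F_sets by auto
  have T01: "prob T = 0 \<or> prob T = 1" unfolding T_def by (rule borel_0_1_law[OF indF])
  have HZT: "(\<Inter>n. H n) - Z \<subseteq> T"
  proof
    fix \<omega> assume \<omega>: "\<omega> \<in> (\<Inter>n. H n) - Z"
    then have sp: "\<omega> \<in> space P" using H_def by auto
    show "\<omega> \<in> T" unfolding T_def
    proof
      fix n
      from \<omega> have "\<pi> \<omega> \<inter> D n \<noteq> {}" by (auto simp: H_def Ncount_eq_0 Int_commute)
      then obtain y where y: "y \<in> \<pi> \<omega>" "y \<in> D n" by blast
      have "y \<notin> (\<Inter>n. D n)" using \<omega> y(1) sp by (auto simp: Z_def Ncount_eq_0)
      then obtain k where k: "y \<notin> D k" by blast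
      have "y \<notin> D (n + k)" using k decD[unfolded decseq_def, rule_format, of k "n + k"] by auto
      from dec_escape[OF y(2) this] obtain j where j: "j \<ge> n" "y \<in> R j" by (auto simp: R_def)
      then have "\<omega> \<in> F j" using y(1) sp by (auto simp: F_def Ncount_eq_0)
      then show "\<omega> \<in> (\<Union>m\<in>{n..}. F m)" using j by auto
    qed
  qed
  have HI: "(\<Inter>n. H n) \<in> sets P" using H_sets by auto
  have "prob (\<Inter>n. H n) \<le> prob (((\<Inter>n. H n) - Z) \<union> Z)"
    using HI Z_sets by (intro finite_measure_mono) auto
  also have "\<dots> \<le> prob ((\<Inter>n. H n) - Z) + prob Z"
    using HI Z_sets by (intro measure_Un_le) auto
  also have "\<dots> \<le> prob T"
    using HZT T_sets pZ by (simp add: finite_measure_mono)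
  finally have "prob T \<noteq> 0" using pH e(1) by simp
  with T01 have "prob T = 1" by simp
  from AE_prob_1[OF this]
  show ?thesis
  proof (rule AE_mp[OF _ AE_I2], intro impI)
    fix \<omega> assume \<omega>: "\<omega> \<in> T" and sp: "\<omega> \<in> space P"
    define J where "J = {j. \<pi> \<omega> \<inter> R j \<noteq> {}}"
    have "infinite J" unfolding infinite_nat_iff_unbounded_le
    proof
      fix n
      from \<omega> obtain j where "j \<ge> n" "\<omega> \<in> F j" unfolding T_def by blast
      then show "\<exists>j\<ge>n. j \<in> J" by (auto simp: F_def J_def Ncount_eq_0 Int_commute)
    qed
    define f where "f j = (SOME y. y \<in> \<pi> \<omega> \<inter> R j)" for j
    have f: "f j \<in> \<pi> \<omega> \<inter> R j" if "j \<in> J" for j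
    proof -
      from that obtain y where "y \<in> \<pi> \<omega> \<inter> R j" unfolding J_def by blast
      then show ?thesis unfolding f_def by (rule someI)
    qed
    have "inj_on f J"
    proof (rule inj_onI)
      fix i j assume "i \<in> J" "j \<in> J" "f i = f j"
      then have "f i \<in> R i" "f j \<in> R j" using f[of i] f[of j] by simp_all
      then have "f i \<in> R i \<inter> R j" using \<open>f i = f j\<close> by simp
      then have "R i \<inter> R j \<noteq> {}" by blast
      then show "i = j" using R_disj unfolding disjoint_family_on_def by blast
    qed
    moreover have "f ` J \<subseteq> A \<inter> \<pi> \<omega>"
    proof
      fix y assume "y \<in> f ` J"
      then obtain j where "j \<in> J" "y = f j" by blast
      then have "y \<in> \<pi> \<omega>" "y \<in> D j" using f[of j] unfolding R_def by auto
      then show "y \<in> A \<inter> \<pi> \<omega>" using D_A[of j] by auto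
    qed
    ultimately have "infinite (A \<inter> \<pi> \<omega>)"
    proof -
      assume inj: "inj_on f J" and sub: "f ` J \<subseteq> A \<inter> \<pi> \<omega>"
      show "infinite (A \<inter> \<pi> \<omega>)"
      proof
        assume "finite (A \<inter> \<pi> \<omega>)"
        then have "finite (f ` J)" using sub by (rule finite_subset[rotated])
        then have "finite J" using inj by (rule finite_imageD)
        then show False using \<open>infinite J\<close> by simp
      qed
    qed
    then show "Ncount A (\<pi> \<omega>) = \<infinity>" by (simp add: Ncount_def)
  qed
qed

end

context main
begin

lemma inf_distr:
  assumes "AE \<omega> in P. Ncount A (\<pi> \<omega>) = \<infinity>"
  shows "distr P (count_space UNIV) (\<lambda>\<omega>. Ncount A (\<pi> \<omega>)) = return (count_space UNIV) \<infinity>"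
proof -
  have "distr P (count_space UNIV) (\<lambda>\<omega>. Ncount A (\<pi> \<omega>)) = distr P (count_space UNIV) (\<lambda>\<omega>. \<infinity>)"
    by (rule distr_cong_AE) (use assms N_meas[OF A] in auto)
  also have "\<dots> = return (count_space UNIV) \<infinity>" by simp
  finally show ?thesis .
qed

lemma poisson_A: "poisson_distribution (distr P (count_space UNIV) (\<lambda>\<omega>. Ncount A (\<pi> \<omega>)))"
proof (cases small)
  case False
  then show ?thesis unfolding poisson_distribution_def using inf_distr[OF not_small_inf] by blast
next
  case sm: True
  show ?thesis
  proof (cases "\<exists>K. \<forall>m. lam m \<le> K")
    case True
    then obtain K where K: "\<And>m. lam m \<le> K" by blast
    obtain c where c: "c \<ge> 0" "\<And>z. 0 \<le> z \<Longrightarrow> z < 1 \<Longrightarrow> G z = exp (- (1 - z) * c)"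
      using small_bounded[OF sm K] by blast
    have "emeasure (distr P (count_space UNIV) (\<lambda>\<omega>. Ncount A (\<pi> \<omega>))) {enat k} = ennreal (c ^ k / fact k * exp (- c))" for k
    proof -
      have "emeasure (distr P (count_space UNIV) (\<lambda>\<omega>. Ncount A (\<pi> \<omega>))) {enat k} =
            emeasure P ((\<lambda>\<omega>. Ncount A (\<pi> \<omega>)) -` {enat k} \<inter> space P)"
        by (rule emeasure_distr[OF N_meas[OF A]]) simp
      also have "(\<lambda>\<omega>. Ncount A (\<pi> \<omega>)) -` {enat k} \<inter> space P = {\<omega> \<in> space P. Ncount A (\<pi> \<omega>) = enat k}"
        by auto
      also have "emeasure P \<dots> = ennreal (q k)" unfolding q_def by (simp add: emeasure_eq_measure)
      also have "q k = c ^ k / fact k * exp (- c)" using q_poisson[OF c(2)] by simp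
      finally show ?thesis .
    qed
    then show ?thesis unfolding poisson_distribution_def using c(1) by blast
  next
    case False
    have G0: "G (1/2) = 0" by (rule unbounded[OF False])
    have s: "(\<lambda>k. q k * (1/2) ^ k) sums 0" using G_sums[of "1/2"] G0 by simp
    have "\<forall>k. q k * (1/2) ^ k = 0"
      using suminf_eq_zero_iff[of "\<lambda>k. q k * (1/2) ^ k"] s q_nonneg by (simp add: sums_iff)
    then have q0: "q k = 0" for k by simp
    have "prob {\<omega> \<in> space P. Ncount A (\<pi> \<omega>) \<noteq> \<infinity>} = 0"
      using q_sum_fin q0 by (simp add: sums_iff)
    then have "AE \<omega> in P. Ncount A (\<pi> \<omega>) = \<infinity>"
      by (subst AE_iff_measurable[OF ev_meas[OF A] refl]) (simp add: emeasure_eq_measure)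
    then show ?thesis unfolding poisson_distribution_def using inf_distr by blast
  qed
qed

end

theorem theorem1p11:
  fixes P :: "'b measure" and M :: "'a measure" and \<pi> :: "'b \<Rightarrow> 'a set"
  assumes "prob_space P"
    and "{(x, x) | x. x \<in> space M} \<in> sets (M \<Otimes>\<^sub>M M)"
    and "cr_set P M \<pi>"
    and "constructive P M \<pi>"
    and "independent_increments P M \<pi>"
    and "\<forall>x\<in>space M. measure P {\<omega> \<in> space P. \<pi> \<omega> \<inter> {x} \<noteq> {}} = 0"
  shows "poisson_process P M \<pi>"
proof -
  obtain B :: "nat \<Rightarrow> 'a set" where B: "\<forall>i. B i \<in> sets M"
    "\<forall>x\<in>space M. \<forall>y\<in>space M. (\<forall>i. x \<in> B i \<longleftrightarrow> y \<in> B i) \<longrightarrow> x = y"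
    using sep_family[OF assms(2)] by blast
  have na: "measure P {\<omega> \<in> space P. x \<in> \<pi> \<omega>} = 0" if "x \<in> space M" for x
  proof -
    have "{\<omega> \<in> space P. x \<in> \<pi> \<omega>} = {\<omega> \<in> space P. \<pi> \<omega> \<inter> {x} \<noteq> {}}" by auto
    then show ?thesis using assms(6) that by simp
  qed
  have "poisson_distribution (distr P (count_space UNIV) (\<lambda>\<omega>. Ncount A (\<pi> \<omega>)))"
    if A: "A \<in> sets M" for A
  proof -
    interpret main P M \<pi> B A
    proof (unfold_locales)
      show "cr_set P M \<pi>" by (rule assms(3))
      show "independent_increments P M \<pi>" by (rule assms(5))
      show "\<And>i. B i \<in> sets M" using B(1) by blast
      show "\<And>x y. x \<in> space M \<Longrightarrow> y \<in> space M \<Longrightarrow> (\<And>i. (x \<in> B i) = (y \<in> B i)) \<Longrightarrow> x = y"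
        using B(2) by blast
      show "A \<in> sets M" by (rule A)
      show "\<And>x. x \<in> space M \<Longrightarrow> measure P {\<omega> \<in> space P. x \<in> \<pi> \<omega>} = 0" by (rule na)
    qed (use sigma_finite_measure.sigma_finite_countable[OF prob_space_imp_sigma_finite[OF assms(1)]]
          prob_space.emeasure_space_1[OF assms(1)] in auto)
    show ?thesis by (rule poisson_A)
  qed
  then show ?thesis unfolding poisson_process_def using assms(3,5) by blast
qed

end
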